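(* Let $A$ be a finite-dimensional evolution algebra over a field $\mathbb{K}$ with natural basis $B$. \begin{enumerate} \item[(i)] If $I$ is an ideal of $A$ with $I=\mathbb{K}u$ and $|\mathrm{supp}_B(u)|>1$, then $A/I$ is not simple. \item[(ii)] If $A=A_1\otimes A_2$ where $A_1,A_2$ are evolution $\mathbb{K}$-algebras with $\dim A_1>1$ and $\dim A_2>1$ (so $A$ is tensorially decomposable), and $0\neq I$ is an ideal of $A$ with $I=\mathbb{K}u$, then $A/I$ is not simple. \end{enumerate}
   Context: An evolution algebra over $\mathbb{K}$ is a $\mathbb{K}$-algebra with a basis $B=\{e_1,\dots,e_n\}$ (natural basis) such that $e_ie_j=0$ for $i\neq j$. For $u=\sum_i\alpha_ie_i\in A$, $\mathrm{supp}_B(u)=\{i:\alpha_i\neq0\}$. The tensor product $A_1\otimes A_2$ of evolution algebras with natural bases $\{a_i\}$, $\{b_p\}$ is the evolution algebra with natural basis $\{a_i\otimes b_p\}$ and product $(a\otimes b)(a'\otimes b')=aa'\otimes bb'$. A $\mathbb{K}$-algebra is simple if its square is nonzero and its only ideals are $0$ and itself. *)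

theory Defs
  imports Main
begin

definition alg_ideal ::
  "'a set \<Rightarrow> ('a \<Rightarrow> 'a \<Rightarrow> 'a) \<Rightarrow> ('k \<Rightarrow> 'a \<Rightarrow> 'a) \<Rightarrow> ('a \<Rightarrow> 'a \<Rightarrow> 'a) \<Rightarrow> 'a \<Rightarrow> 'a set \<Rightarrow> bool"
  where "alg_ideal S add sm mul z I \<longleftrightarrow>
     I \<subseteq> S \<and> z \<in> I \<and> (\<forall>x\<in>I. \<forall>y\<in>I. add x y \<in> I) \<and> (\<forall>a. \<forall>x\<in>I. sm a x \<in> I) \<and>
     (\<forall>x\<in>I. \<forall>a\<in>S. mul a x \<in> I \<and> mul x a \<in> I)"

definition alg_simple ::
  "'a set \<Rightarrow> ('a \<Rightarrow> 'a \<Rightarrow> 'a) \<Rightarrow> ('k \<Rightarrow> 'a \<Rightarrow> 'a) \<Rightarrow> ('a \<Rightarrow> 'a \<Rightarrow> 'a) \<Rightarrow> 'a \<Rightarrow> bool"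
  where "alg_simple S add sm mul z \<longleftrightarrow>
     (\<exists>x\<in>S. \<exists>y\<in>S. mul x y \<noteq> z) \<and>
     (\<forall>J. alg_ideal S add sm mul z J \<longrightarrow> J = {z} \<or> J = S)"

definition coset :: "('a \<Rightarrow> 'a \<Rightarrow> 'a) \<Rightarrow> 'a \<Rightarrow> 'a set \<Rightarrow> 'a set"
  where "coset add x I = (\<lambda>y. add x y) ` I"

definition quot_carrier :: "'a set \<Rightarrow> ('a \<Rightarrow> 'a \<Rightarrow> 'a) \<Rightarrow> 'a set \<Rightarrow> 'a set set"
  where "quot_carrier S add I = (\<lambda>x. coset add x I) ` S"

definition quot_add :: "('a \<Rightarrow> 'a \<Rightarrow> 'a) \<Rightarrow> 'a set \<Rightarrow> 'a set \<Rightarrow> 'a set \<Rightarrow> 'a set"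
  where "quot_add add I X Y = coset add (add (SOME x. x \<in> X) (SOME y. y \<in> Y)) I"

definition quot_smult :: "('a \<Rightarrow> 'a \<Rightarrow> 'a) \<Rightarrow> ('k \<Rightarrow> 'a \<Rightarrow> 'a) \<Rightarrow> 'a set \<Rightarrow> 'k \<Rightarrow> 'a set \<Rightarrow> 'a set"
  where "quot_smult add sm I a X = coset add (sm a (SOME x. x \<in> X)) I"

definition quot_mul :: "('a \<Rightarrow> 'a \<Rightarrow> 'a) \<Rightarrow> ('a \<Rightarrow> 'a \<Rightarrow> 'a) \<Rightarrow> 'a set \<Rightarrow> 'a set \<Rightarrow> 'a set \<Rightarrow> 'a set"
  where "quot_mul add mul I X Y = coset add (mul (SOME x. x \<in> X) (SOME y. y \<in> Y)) I"

text \<open>The quotient S/I is simple (its zero is the coset I itself).\<close>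
definition quot_simple ::
  "'a set \<Rightarrow> ('a \<Rightarrow> 'a \<Rightarrow> 'a) \<Rightarrow> ('k \<Rightarrow> 'a \<Rightarrow> 'a) \<Rightarrow> ('a \<Rightarrow> 'a \<Rightarrow> 'a) \<Rightarrow> 'a set \<Rightarrow> bool"
  where "quot_simple S add sm mul I \<longleftrightarrow>
     alg_simple (quot_carrier S add I) (quot_add add I) (quot_smult add sm I) (quot_mul add mul I) I"

text \<open>An evolution algebra with finite natural basis {e_i | i \<in> N}, written in coordinates
  w.r.t. that basis: elements are functions 'i \<Rightarrow> 'k vanishing outside N, and
  e_i e_i = \<Sum>_{j\<in>N} c i j e_j, e_i e_j = 0 for i \<noteq> j.\<close>

definition evo_carrier :: "'i set \<Rightarrow> ('i \<Rightarrow> 'k::field) set"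
  where "evo_carrier N = {x. \<forall>i. i \<notin> N \<longrightarrow> x i = 0}"

definition evo_add :: "('i \<Rightarrow> 'k::field) \<Rightarrow> ('i \<Rightarrow> 'k) \<Rightarrow> ('i \<Rightarrow> 'k)"
  where "evo_add x y = (\<lambda>i. x i + y i)"

definition evo_smult :: "'k::field \<Rightarrow> ('i \<Rightarrow> 'k) \<Rightarrow> ('i \<Rightarrow> 'k)"
  where "evo_smult a x = (\<lambda>i. a * x i)"

definition evo_zero :: "'i \<Rightarrow> 'k::field"
  where "evo_zero = (\<lambda>i. 0)"

definition evo_mult :: "'i set \<Rightarrow> ('i \<Rightarrow> 'i \<Rightarrow> 'k::field) \<Rightarrow> ('i \<Rightarrow> 'k) \<Rightarrow> ('i \<Rightarrow> 'k) \<Rightarrow> ('i \<Rightarrow> 'k)"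
  where "evo_mult N c x y = (\<lambda>k. if k \<in> N then (\<Sum>i\<in>N. x i * y i * c i k) else 0)"

definition evo_ideal :: "'i set \<Rightarrow> ('i \<Rightarrow> 'i \<Rightarrow> 'k::field) \<Rightarrow> ('i \<Rightarrow> 'k) set \<Rightarrow> bool"
  where "evo_ideal N c I = alg_ideal (evo_carrier N) evo_add (evo_smult :: 'k \<Rightarrow> _) (evo_mult N c) evo_zero I"

definition evo_quot_simple :: "'i set \<Rightarrow> ('i \<Rightarrow> 'i \<Rightarrow> 'k::field) \<Rightarrow> ('i \<Rightarrow> 'k) set \<Rightarrow> bool"
  where "evo_quot_simple N c I = quot_simple (evo_carrier N) evo_add (evo_smult :: 'k \<Rightarrow> _) (evo_mult N c) I"

definition evo_supp :: "'i set \<Rightarrow> ('i \<Rightarrow> 'k::field) \<Rightarrow> 'i set"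
  where "evo_supp N u = {i \<in> N. u i \<noteq> 0}"

definition span1 :: "('i \<Rightarrow> 'k::field) \<Rightarrow> ('i \<Rightarrow> 'k) set"
  where "span1 u = range (\<lambda>a. evo_smult a u)"

text \<open>Tensor product: natural basis a_i \<otimes> b_p indexed by N1 \<times> N2, with
  (a_i \<otimes> b_p)^2 = a_i^2 \<otimes> b_p^2 = \<Sum> c1 i j * c2 p q (a_j \<otimes> b_q).\<close>
definition tensor_const :: "('i \<Rightarrow> 'i \<Rightarrow> 'k::field) \<Rightarrow> ('j \<Rightarrow> 'j \<Rightarrow> 'k) \<Rightarrow> ('i \<times> 'j) \<Rightarrow> ('i \<times> 'j) \<Rightarrow> 'k"
  where "tensor_const c1 c2 = (\<lambda>(i, p) (j, q). c1 i j * c2 p q)"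

end

theory Submission
  imports Defs
begin

lemma mem_span1: "z \<in> span1 u \<longleftrightarrow> (\<exists>r. z = (\<lambda>i. r * u i))"
  by (auto simp: span1_def evo_smult_def)

lemma coset_span: "coset evo_add x (span1 u) = range (\<lambda>a i. x i + a * u i)"
  unfolding coset_def span1_def evo_add_def evo_smult_def by (simp add: image_image)

lemma coset_mem: "z \<in> coset evo_add x (span1 u) \<longleftrightarrow> (\<exists>a. z = (\<lambda>i. x i + a * u i))"
  by (auto simp: coset_span)

lemma self_in_coset: "x \<in> coset evo_add x (span1 u)"
  unfolding coset_mem by (rule exI[of _ 0]) simp

lemma coset_shift:
  assumes "\<And>i. x i = y i + t * u i"
  shows "coset evo_add x (span1 u) = coset evo_add y (span1 u)"
proof (intro set_eqI iffI)
  fix z assume "z \<in> coset evo_add x (span1 u)"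
  then obtain a where "z = (\<lambda>i. x i + a * u i)" by (auto simp: coset_mem)
  then have "z = (\<lambda>i. y i + (t + a) * u i)" using assms by (auto simp: algebra_simps)
  then show "z \<in> coset evo_add y (span1 u)" by (auto simp: coset_mem)
next
  fix z assume "z \<in> coset evo_add y (span1 u)"
  then obtain a where "z = (\<lambda>i. y i + a * u i)" by (auto simp: coset_mem)
  then have "z = (\<lambda>i. x i + (a - t) * u i)" using assms by (auto simp: algebra_simps)
  then show "z \<in> coset evo_add x (span1 u)" by (auto simp: coset_mem)
qed

lemma rep_coset: "\<exists>t. (SOME z. z \<in> coset evo_add x (span1 u)) = (\<lambda>i. x i + t * u i)"
proof -
  have "(SOME z. z \<in> coset evo_add x (span1 u)) \<in> coset evo_add x (span1 u)"
    by (rule someI[of _ x]) (rule self_in_coset)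
  then show ?thesis by (simp add: coset_mem)
qed

lemma coset_zero: "coset evo_add evo_zero (span1 u) = span1 u"
  by (simp add: coset_def evo_add_def evo_zero_def)

lemma quot_add_coset:
  "quot_add evo_add (span1 u) (coset evo_add x (span1 u)) (coset evo_add y (span1 u))
    = coset evo_add (evo_add x y) (span1 u)"
proof -
  obtain t where t: "(SOME z. z \<in> coset evo_add x (span1 u)) = (\<lambda>i. x i + t * u i)"
    using rep_coset by blast
  obtain s where s: "(SOME z. z \<in> coset evo_add y (span1 u)) = (\<lambda>i. y i + s * u i)"
    using rep_coset by blast
  show ?thesis unfolding quot_add_def t s
    by (rule coset_shift[where t = "t + s"]) (simp add: evo_add_def algebra_simps)
qed

lemma quot_smult_coset:
  "quot_smult evo_add evo_smult (span1 u) a (coset evo_add x (span1 u))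
    = coset evo_add (evo_smult a x) (span1 u)"
proof -
  obtain t where t: "(SOME z. z \<in> coset evo_add x (span1 u)) = (\<lambda>i. x i + t * u i)"
    using rep_coset by blast
  show ?thesis unfolding quot_smult_def t
    by (rule coset_shift[where t = "a * t"]) (simp add: evo_smult_def algebra_simps)
qed

lemma mult_expand:
  "evo_mult N c (\<lambda>i. x i + t * u i) (\<lambda>i. y i + s * v i) k =
   evo_mult N c x y k + t * evo_mult N c u y k + s * evo_mult N c x v k + t * s * evo_mult N c u v k"
  by (simp add: evo_mult_def sum.distrib sum_distrib_left algebra_simps)

lemma mult_comm: "evo_mult N c x y = evo_mult N c y x"
proof -
  have "\<And>i k. x i * y i * c i k = y i * x i * c i k" by simp
  then show ?thesis unfolding evo_mult_def by presburger
qed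

lemma ideal_facts:
  assumes "evo_ideal N c (span1 u)" "y \<in> evo_carrier N"
  shows "\<exists>r. evo_mult N c u y = (\<lambda>i. r * u i)"
proof -
  have "u \<in> span1 u" unfolding mem_span1 by (rule exI[of _ 1]) simp
  then have "evo_mult N c y u \<in> span1 u" using assms unfolding evo_ideal_def alg_ideal_def by blast
  then show ?thesis by (simp add: mem_span1 mult_comm)
qed

lemma quot_mul_coset:
  assumes id: "evo_ideal N c (span1 u)" and x: "x \<in> evo_carrier N" and y: "y \<in> evo_carrier N"
  shows "quot_mul evo_add (evo_mult N c) (span1 u) (coset evo_add x (span1 u)) (coset evo_add y (span1 u))
    = coset evo_add (evo_mult N c x y) (span1 u)"
proof -
  obtain t where t: "(SOME z. z \<in> coset evo_add x (span1 u)) = (\<lambda>i. x i + t * u i)"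
    using rep_coset by blast
  obtain s where s: "(SOME z. z \<in> coset evo_add y (span1 u)) = (\<lambda>i. y i + s * u i)"
    using rep_coset by blast
  have uS: "u \<in> evo_carrier N"
  proof -
    have "u \<in> span1 u" unfolding mem_span1 by (rule exI[of _ 1]) simp
    then show ?thesis using id unfolding evo_ideal_def alg_ideal_def by blast
  qed
  obtain r1 where r1: "evo_mult N c u y = (\<lambda>i. r1 * u i)" using ideal_facts[OF id y] by blast
  obtain r2 where r2: "evo_mult N c u x = (\<lambda>i. r2 * u i)" using ideal_facts[OF id x] by blast
  obtain r3 where r3: "evo_mult N c u u = (\<lambda>i. r3 * u i)" using ideal_facts[OF id uS] by blast
  have r2': "evo_mult N c x u = (\<lambda>i. r2 * u i)" using r2 mult_comm by metis
  show ?thesis unfolding quot_mul_def t s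
  proof (rule coset_shift[where t = "t * r1 + s * r2 + t * s * r3"])
    fix k
    show "evo_mult N c (\<lambda>i. x i + t * u i) (\<lambda>i. y i + s * u i) k =
      evo_mult N c x y k + (t * r1 + s * r2 + t * s * r3) * u k"
      unfolding mult_expand r1 r2' r3 by (simp add: algebra_simps)
  qed
qed

lemma not_simple_allprod:
  assumes id: "evo_ideal N c (span1 u)"
    and all: "\<forall>x\<in>evo_carrier N. \<forall>y\<in>evo_carrier N. evo_mult N c x y \<in> span1 u"
  shows "\<not> evo_quot_simple N c (span1 u)"
proof
  assume "evo_quot_simple N c (span1 u)"
  then obtain X Y where X: "X \<in> quot_carrier (evo_carrier N) evo_add (span1 u)"
    and Y: "Y \<in> quot_carrier (evo_carrier N) evo_add (span1 u)"
    and ne: "quot_mul evo_add (evo_mult N c) (span1 u) X Y \<noteq> span1 u"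
    unfolding evo_quot_simple_def quot_simple_def alg_simple_def by blast
  obtain x where x: "x \<in> evo_carrier N" "X = coset evo_add x (span1 u)"
    using X unfolding quot_carrier_def by blast
  obtain y where y: "y \<in> evo_carrier N" "Y = coset evo_add y (span1 u)"
    using Y unfolding quot_carrier_def by blast
  obtain r where r: "evo_mult N c x y = (\<lambda>i. r * u i)" using all x y mem_span1 by metis
  have "coset evo_add (evo_mult N c x y) (span1 u) = coset evo_add evo_zero (span1 u)"
    by (rule coset_shift[where t = r]) (simp add: r evo_zero_def)
  then show False using ne quot_mul_coset[OF id x(1) y(1)] x y coset_zero by metis
qed

lemma not_simple_W:
  assumes id: "evo_ideal N c (span1 u)"
    and W: "alg_ideal (evo_carrier N) evo_add (evo_smult :: 'k \<Rightarrow> _) (evo_mult N c) evo_zero W"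
    and IW: "span1 u \<subseteq> W"
    and w: "w \<in> W" "w \<notin> span1 (u :: 'i \<Rightarrow> 'k::field)"
    and x0: "x0 \<in> evo_carrier N" "x0 \<notin> W"
  shows "\<not> evo_quot_simple N c (span1 u)"
proof
  assume simple: "evo_quot_simple N c (span1 u)"
  define J where "J = (\<lambda>x. coset evo_add x (span1 u)) ` W"
  have WS: "W \<subseteq> evo_carrier N" using W unfolding alg_ideal_def by blast
  have "alg_ideal (quot_carrier (evo_carrier N) evo_add (span1 u)) (quot_add evo_add (span1 u))
     (quot_smult evo_add (evo_smult :: 'k \<Rightarrow> _) (span1 u)) (quot_mul evo_add (evo_mult N c) (span1 u)) (span1 u) J"
    unfolding alg_ideal_def
  proof (intro conjI ballI allI)
    show "J \<subseteq> quot_carrier (evo_carrier N) evo_add (span1 u)"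
      unfolding J_def quot_carrier_def using WS by blast
    show "span1 u \<in> J" unfolding J_def using W coset_zero unfolding alg_ideal_def by (metis image_eqI)
  next
    fix X Y assume "X \<in> J" "Y \<in> J"
    then obtain x y where "x \<in> W" "y \<in> W" "X = coset evo_add x (span1 u)" "Y = coset evo_add y (span1 u)"
      unfolding J_def by blast
    then show "quot_add evo_add (span1 u) X Y \<in> J"
      using W quot_add_coset unfolding J_def alg_ideal_def by (metis image_eqI)
  next
    fix a X assume "X \<in> J"
    then obtain x where "x \<in> W" "X = coset evo_add x (span1 u)"
      unfolding J_def by blast
    then show "quot_smult evo_add evo_smult (span1 u) a X \<in> J"
      using W quot_smult_coset unfolding J_def alg_ideal_def by (metis image_eqI)
  next
    fix X A assume "X \<in> J" "A \<in> quot_carrier (evo_carrier N) evo_add (span1 u)"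
    then obtain x a where xa: "x \<in> W" "a \<in> evo_carrier N" "X = coset evo_add x (span1 u)"
      "A = coset evo_add a (span1 u)"
      unfolding J_def quot_carrier_def by blast
    have xS: "x \<in> evo_carrier N" using xa WS by blast
    have "evo_mult N c a x \<in> W" "evo_mult N c x a \<in> W" using W xa unfolding alg_ideal_def by blast+
    then show "quot_mul evo_add (evo_mult N c) (span1 u) A X \<in> J"
               "quot_mul evo_add (evo_mult N c) (span1 u) X A \<in> J"
      using quot_mul_coset[OF id xS xa(2)] quot_mul_coset[OF id xa(2) xS] xa unfolding J_def by auto
  qed
  then have "J = {span1 u} \<or> J = quot_carrier (evo_carrier N) evo_add (span1 u)"
    using simple unfolding evo_quot_simple_def quot_simple_def alg_simple_def by blast
  then show False
  proof
    assume "J = {span1 u}"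
    then have "coset evo_add w (span1 u) = span1 u" using w unfolding J_def by blast
    then show False using self_in_coset[of w u] w by simp
  next
    assume "J = quot_carrier (evo_carrier N) evo_add (span1 u)"
    then have "coset evo_add x0 (span1 u) \<in> J" using x0 unfolding quot_carrier_def by blast
    then obtain w' where w': "w' \<in> W" "coset evo_add x0 (span1 u) = coset evo_add w' (span1 u)"
      unfolding J_def by blast
    then have "x0 \<in> coset evo_add w' (span1 u)" using self_in_coset by metis
    then obtain a where a: "x0 = (\<lambda>i. w' i + a * u i)" by (auto simp: coset_mem)
    have "(\<lambda>i. a * u i) \<in> W" using IW mem_span1 by blast
    then have "evo_add w' (\<lambda>i. a * u i) \<in> W" using W w' unfolding alg_ideal_def by blast
    then show False using x0 a by (simp add: evo_add_def)
  qed
qed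


lemma card_gt_1_other:
  assumes "1 < card A" "x \<in> A" shows "\<exists>y\<in>A. y \<noteq> x"
proof -
  have "finite A" using assms(1) by (metis card.infinite not_less_zero)
  then show ?thesis using assms card_le_Suc0_iff_eq[of A] by (metis One_nat_def not_le)
qed

lemma mult_add_left:
  "evo_mult N c (evo_add x y) z = evo_add (evo_mult N c x z) (evo_mult N c y z)"
  by (auto simp: evo_mult_def evo_add_def sum.distrib algebra_simps)

lemma mult_smult_left:
  "evo_mult N c (evo_smult a x) z = evo_smult a (evo_mult N c x z)"
  by (auto simp: evo_mult_def evo_smult_def sum_distrib_left algebra_simps)

lemma mult_zero_left: "evo_mult N c evo_zero z = evo_zero"
  by (auto simp: evo_mult_def evo_zero_def)

lemma mult_carrier: "evo_mult N c x y \<in> evo_carrier N"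
  by (auto simp: evo_mult_def evo_carrier_def)

lemma mult_delta:
  assumes "finite N" "m \<in> N"
  shows "evo_mult N c x (\<lambda>i. if i = m then 1 else 0) = (\<lambda>k. if k \<in> N then x m * c m k else 0)"
proof (rule ext)
  fix k
  have "(\<Sum>i\<in>N. x i * (if i = m then 1 else 0) * c i k) = (\<Sum>i\<in>N. if i = m then x m * c m k else 0)"
    by (rule sum.cong) auto
  also have "\<dots> = x m * c m k" using assms by simp
  finally show "evo_mult N c x (\<lambda>i. if i = m then 1 else 0) k = (if k \<in> N then x m * c m k else 0)"
    by (simp add: evo_mult_def)
qed

lemma part_i:
  fixes u :: "'i \<Rightarrow> 'k::field"
  assumes fin: "finite N" and uS: "u \<in> evo_carrier N" and id: "evo_ideal N c (span1 u)"
    and card: "card (evo_supp N u) > 1"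
  shows "\<not> evo_quot_simple N c (span1 u)"
proof -
  obtain j where j: "j \<in> evo_supp N u" using card by (metis card.empty ex_in_conv not_less_zero)
  obtain j2 where j2: "j2 \<in> evo_supp N u" "j2 \<noteq> j" using card_gt_1_other[OF card j] by blast
  have jN: "j \<in> N" and uj: "u j \<noteq> 0" using j by (auto simp: evo_supp_def)
  have uj2: "u j2 \<noteq> 0" using j2 by (auto simp: evo_supp_def)
  define S where "S = (evo_carrier N :: ('i \<Rightarrow> 'k) set)"
  define W where "W = {x \<in> S. \<forall>y\<in>S. evo_mult N c x y \<in> span1 u}"
  have IS: "span1 u \<subseteq> S" using id unfolding evo_ideal_def alg_ideal_def S_def by blast
  have idm: "\<And>z y. z \<in> span1 u \<Longrightarrow> y \<in> S \<Longrightarrow> evo_mult N c z y \<in> span1 u \<and> evo_mult N c y z \<in> span1 u"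
    using id unfolding evo_ideal_def alg_ideal_def S_def by blast
  show ?thesis
  proof (cases "W = S")
    case True
    show ?thesis
      by (rule not_simple_allprod[OF id]) (use True in \<open>auto simp: W_def S_def\<close>)
  next
    case False
    then obtain x0 where x0: "x0 \<in> S" "x0 \<notin> W" unfolding W_def by blast
    define e where "e = (\<lambda>i. if i = j then (1::'k) else 0)"
    have eS: "e \<in> S" using jN by (auto simp: e_def S_def evo_carrier_def)
    obtain r where r: "evo_mult N c u e = (\<lambda>i. r * u i)"
      using ideal_facts[OF id] eS S_def by blast
    have eW: "e \<in> W" unfolding W_def
    proof (intro CollectI conjI ballI eS)
      fix y assume "y \<in> S"
      have "evo_mult N c e y = (\<lambda>i. (y j / u j * r) * u i)"
      proof (rule ext)
        fix k
        have "evo_mult N c e y k = (if k \<in> N then y j * c j k else 0)"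
          using mult_comm[of N c e y] mult_delta[OF fin jN, of c y] by (simp add: e_def)
        moreover have "(if k \<in> N then u j * c j k else 0) = r * u k"
          using fun_cong[OF r, of k] mult_delta[OF fin jN, of c u] by (simp add: e_def)
        ultimately show "evo_mult N c e y k = (y j / u j * r) * u k"
          using uj by (cases "k \<in> N") (auto simp: field_simps)
      qed
      then show "evo_mult N c e y \<in> span1 u" unfolding mem_span1 by blast
    qed
    have enI: "e \<notin> span1 u"
    proof
      assume "e \<in> span1 u"
      then obtain a where a: "e = (\<lambda>i. a * u i)" by (auto simp: mem_span1)
      have "a * u j2 = 0" using fun_cong[OF a, of j2] j2 by (simp add: e_def)
      then have "a = 0" using uj2 by simp
      then show False using fun_cong[OF a, of j] by (simp add: e_def)
    qed
    have Wid: "alg_ideal (evo_carrier N) evo_add (evo_smult :: 'k \<Rightarrow> _) (evo_mult N c) evo_zero W"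
      unfolding alg_ideal_def
    proof (intro conjI ballI allI)
      show "W \<subseteq> evo_carrier N" by (auto simp: W_def S_def)
      have "evo_zero = (\<lambda>i. 0 * u i)" by (simp add: evo_zero_def)
      then have "evo_zero \<in> span1 u" unfolding mem_span1 by blast
      moreover have "evo_zero \<in> evo_carrier N" by (simp add: evo_zero_def evo_carrier_def)
      ultimately show "evo_zero \<in> W" unfolding W_def S_def
      proof (intro CollectI conjI ballI)
        fix y :: "'i \<Rightarrow> 'k"
        have "evo_mult N c evo_zero y = evo_zero" by (rule mult_zero_left)
        then show "evo_mult N c evo_zero y \<in> span1 u" using \<open>evo_zero \<in> span1 u\<close> by metis
      qed
    next
      fix x y assume "x \<in> W" "y \<in> W"
      then have xy: "x \<in> evo_carrier N" "y \<in> evo_carrier N"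
        "\<forall>z\<in>evo_carrier N. evo_mult N c x z \<in> span1 u"
        "\<forall>z\<in>evo_carrier N. evo_mult N c y z \<in> span1 u" unfolding W_def S_def by auto
      show "evo_add x y \<in> W" unfolding W_def S_def
      proof (intro CollectI conjI ballI)
        show "evo_add x y \<in> evo_carrier N" using xy(1,2) by (simp add: evo_add_def evo_carrier_def)
        fix z :: "'i \<Rightarrow> 'k" assume z: "z \<in> evo_carrier N"
        obtain a b where a: "evo_mult N c x z = (\<lambda>i. a * u i)" and b: "evo_mult N c y z = (\<lambda>i. b * u i)"
          using xy(3,4) z unfolding mem_span1 by blast
        have "evo_mult N c (evo_add x y) z = (\<lambda>i. (a + b) * u i)"
          unfolding mult_add_left a b by (simp add: evo_add_def distrib_right)
        then show "evo_mult N c (evo_add x y) z \<in> span1 u" unfolding mem_span1 by blast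
      qed
    next
      fix a x assume "x \<in> W"
      then have xy: "x \<in> evo_carrier N"
        "\<forall>z\<in>evo_carrier N. evo_mult N c x z \<in> span1 u" unfolding W_def S_def by auto
      show "evo_smult a x \<in> W" unfolding W_def S_def
      proof (intro CollectI conjI ballI)
        show "evo_smult a x \<in> evo_carrier N" using xy(1) by (simp add: evo_smult_def evo_carrier_def)
        fix z :: "'i \<Rightarrow> 'k" assume z: "z \<in> evo_carrier N"
        obtain b where b: "evo_mult N c x z = (\<lambda>i. b * u i)"
          using xy(2) z unfolding mem_span1 by blast
        have "evo_mult N c (evo_smult a x) z = (\<lambda>i. (a * b) * u i)"
          unfolding mult_smult_left b by (simp add: evo_smult_def mult.assoc)
        then show "evo_mult N c (evo_smult a x) z \<in> span1 u" unfolding mem_span1 by blast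
      qed
    next
      fix x a :: "'i \<Rightarrow> 'k" assume x: "x \<in> W" and a: "a \<in> evo_carrier N"
      have m1: "evo_mult N c x a \<in> span1 u" using x a by (auto simp: W_def S_def)
      have "evo_mult N c x a \<in> W" unfolding W_def using m1 idm mult_carrier S_def by blast
      then show "evo_mult N c x a \<in> W" "evo_mult N c a x \<in> W" using mult_comm by metis+
    qed
    have IW: "span1 u \<subseteq> W" unfolding W_def using IS idm by blast
    show ?thesis by (rule not_simple_W[OF id Wid IW eW enI x0[unfolded S_def]])
  qed
qed


lemma not_simple_coord:
  fixes u :: "'i \<Rightarrow> 'k::field"
  assumes fin: "finite N" and id: "evo_ideal N c (span1 u)" and MN: "M \<subseteq> N"
    and cM: "\<forall>m\<in>M. \<forall>k\<in>N. k \<notin> M \<longrightarrow> c m k = 0"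
    and ma: "ma \<in> M" and u0: "\<forall>m. m \<noteq> ma \<longrightarrow> u m = 0"
    and mb: "mb \<in> M" "mb \<noteq> ma" and mc: "mc \<in> N" "mc \<notin> M"
  shows "\<not> evo_quot_simple N c (span1 u)"
proof -
  define W where "W = {x \<in> (evo_carrier N :: ('i \<Rightarrow> 'k) set). \<forall>m. m \<notin> M \<longrightarrow> x m = 0}"
  have mulW: "evo_mult N c a x \<in> W" if x: "x \<in> W" for a x :: "'i \<Rightarrow> 'k"
    unfolding W_def
  proof (intro CollectI conjI allI impI mult_carrier)
    fix k assume k: "k \<notin> M"
    show "evo_mult N c a x k = 0"
    proof (cases "k \<in> N")
      case True
      have "(\<Sum>i\<in>N. a i * x i * c i k) = 0"
      proof (rule sum.neutral, rule ballI)
        fix i assume i: "i \<in> N"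
        show "a i * x i * c i k = 0"
        proof (cases "i \<in> M")
          case True then show ?thesis using cM k \<open>k \<in> N\<close> by simp
        next
          case False then show ?thesis using x by (simp add: W_def)
        qed
      qed
      then show ?thesis by (simp add: evo_mult_def True)
    next
      case False then show ?thesis by (simp add: evo_mult_def)
    qed
  qed
  have Wid: "alg_ideal (evo_carrier N) evo_add (evo_smult :: 'k \<Rightarrow> _) (evo_mult N c) evo_zero W"
    unfolding alg_ideal_def
  proof (intro conjI ballI allI)
    show "W \<subseteq> evo_carrier N" by (auto simp: W_def)
    show "evo_zero \<in> W" by (simp add: W_def evo_zero_def evo_carrier_def)
  next
    fix x y assume "x \<in> W" "y \<in> W"
    then show "evo_add x y \<in> W" by (simp add: W_def evo_add_def evo_carrier_def)
  next
    fix a x assume "x \<in> W"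
    then show "evo_smult a x \<in> W" by (simp add: W_def evo_smult_def evo_carrier_def)
  next
    fix x a :: "'i \<Rightarrow> 'k" assume "x \<in> W"
    then show "evo_mult N c a x \<in> W" "evo_mult N c x a \<in> W" using mulW mult_comm by metis+
  qed
  have IS: "span1 u \<subseteq> evo_carrier N" using id unfolding evo_ideal_def alg_ideal_def by blast
  have IW: "span1 u \<subseteq> W"
  proof
    fix z assume z: "z \<in> span1 u"
    then obtain r where r: "z = (\<lambda>i. r * u i)" by (auto simp: mem_span1)
    have "\<forall>m. m \<notin> M \<longrightarrow> z m = 0" using r u0 ma by auto
    then show "z \<in> W" using z IS by (auto simp: W_def)
  qed
  define e where "e = (\<lambda>i. if i = mb then (1::'k) else 0)"
  have eW: "e \<in> W" using mb MN by (auto simp: W_def e_def evo_carrier_def)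
  have enI: "e \<notin> span1 u"
  proof
    assume "e \<in> span1 u"
    then obtain r where "e = (\<lambda>i. r * u i)" by (auto simp: mem_span1)
    from fun_cong[OF this, of mb] show False using u0 mb by (simp add: e_def)
  qed
  define x0 where "x0 = (\<lambda>i. if i = mc then (1::'k) else 0)"
  have x0: "x0 \<in> evo_carrier N" "x0 \<notin> W" using mc by (auto simp: W_def x0_def evo_carrier_def)
  show ?thesis by (rule not_simple_W[OF id Wid IW eW enI x0])
qed

theorem theorem4p7:
  shows "(\<forall>(N :: 'i set) (c :: 'i \<Rightarrow> 'i \<Rightarrow> 'k::field) u.
            finite N \<and> u \<in> evo_carrier N \<and> evo_ideal N c (span1 u) \<and> card (evo_supp N u) > 1
            \<longrightarrow> \<not> evo_quot_simple N c (span1 u))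
       \<and> (\<forall>(N1 :: 'i set) (N2 :: 'j set) (c1 :: 'i \<Rightarrow> 'i \<Rightarrow> 'k) (c2 :: 'j \<Rightarrow> 'j \<Rightarrow> 'k) u.
            finite N1 \<and> finite N2 \<and> card N1 > 1 \<and> card N2 > 1 \<and>
            u \<in> evo_carrier (N1 \<times> N2) \<and> evo_ideal (N1 \<times> N2) (tensor_const c1 c2) (span1 u) \<and>
            span1 u \<noteq> {evo_zero}
            \<longrightarrow> \<not> evo_quot_simple (N1 \<times> N2) (tensor_const c1 c2) (span1 u))"
proof (intro conjI allI impI)
  fix N :: "'i set" and c :: "'i \<Rightarrow> 'i \<Rightarrow> 'k" and u
  assume "finite N \<and> u \<in> evo_carrier N \<and> evo_ideal N c (span1 u) \<and> card (evo_supp N u) > 1"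
  then show "\<not> evo_quot_simple N c (span1 u)" using part_i by blast
next
  fix N1 :: "'i set" and N2 :: "'j set" and c1 :: "'i \<Rightarrow> 'i \<Rightarrow> 'k" and c2 :: "'j \<Rightarrow> 'j \<Rightarrow> 'k" and u
  assume H: "finite N1 \<and> finite N2 \<and> card N1 > 1 \<and> card N2 > 1 \<and>
            u \<in> evo_carrier (N1 \<times> N2) \<and> evo_ideal (N1 \<times> N2) (tensor_const c1 c2) (span1 u) \<and>
            span1 u \<noteq> {evo_zero}"
  define N where "N = N1 \<times> N2"
  define c where "c = tensor_const c1 c2"
  have fin: "finite N" using H by (simp add: N_def)
  have uS: "u \<in> evo_carrier N" and id: "evo_ideal N c (span1 u)" and ne: "span1 u \<noteq> {evo_zero}"
    using H by (auto simp: N_def c_def)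
  have c1N: "card N1 > 1" and c2N: "card N2 > 1" using H by auto
  show "\<not> evo_quot_simple (N1 \<times> N2) (tensor_const c1 c2) (span1 u)"
  proof (cases "card (evo_supp N u) > 1")
    case True
    then show ?thesis using part_i[OF fin uS id] by (simp add: N_def c_def)
  next
    case False
    have "u \<noteq> evo_zero"
    proof
      assume "u = evo_zero"
      then have "span1 u = {evo_zero}" by (auto simp: span1_def evo_smult_def evo_zero_def)
      then show False using ne by simp
    qed
    then obtain m0 where um0: "u m0 \<noteq> 0" unfolding evo_zero_def by (meson ext)
    then have m0N: "m0 \<in> N" using uS unfolding evo_carrier_def by blast
    have finS: "finite (evo_supp N u)" using fin by (simp add: evo_supp_def)
    have u0: "\<forall>m. m \<noteq> m0 \<longrightarrow> u m = 0"
    proof (intro allI impI)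
      fix m assume mm: "m \<noteq> m0"
      show "u m = 0"
      proof (rule ccontr)
        assume "u m \<noteq> 0"
        then have "m \<in> N" using uS unfolding evo_carrier_def by blast
        then have "m \<in> evo_supp N u" "m0 \<in> evo_supp N u" using \<open>u m \<noteq> 0\<close> um0 m0N
          by (auto simp: evo_supp_def)
        then show False using False card_le_Suc0_iff_eq[OF finS] mm by auto
      qed
    qed
    obtain i p where ip: "m0 = (i, p)" by (cases m0)
    have iN: "i \<in> N1" and pN: "p \<in> N2" using m0N ip by (auto simp: N_def)
    define e where "e = (\<lambda>m. if m = m0 then (1::'k) else 0)"
    have eS: "e \<in> evo_carrier N" using m0N by (auto simp: e_def evo_carrier_def)
    obtain r where r: "evo_mult N c u e = (\<lambda>k. r * u k)" using ideal_facts[OF id eS] by blast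
    have cz: "c1 i j * c2 p q = 0" if j: "j \<in> N1" and q: "q \<in> N2" and jq: "(j, q) \<noteq> (i, p)" for j q
    proof -
      have "evo_mult N c u e (j, q) = u m0 * c m0 (j, q)"
        using mult_delta[OF fin m0N, of c u] j q by (simp add: e_def N_def)
      moreover have "evo_mult N c u e (j, q) = 0" using r u0 jq ip by simp
      ultimately have "u m0 * (c1 i j * c2 p q) = 0" by (simp add: ip c_def tensor_const_def)
      then show ?thesis using um0 by simp
    qed
    obtain i' where i': "i' \<in> N1" "i' \<noteq> i" using card_gt_1_other[OF c1N iN] by blast
    obtain p' where p': "p' \<in> N2" "p' \<noteq> p" using card_gt_1_other[OF c2N pN] by blast
    have "(\<forall>j\<in>N1. j \<noteq> i \<longrightarrow> c1 i j = 0) \<or> (\<forall>q\<in>N2. q \<noteq> p \<longrightarrow> c2 p q = 0)"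
    proof (rule ccontr)
      assume "\<not> ?thesis"
      then obtain j q where "j \<in> N1" "j \<noteq> i" "c1 i j \<noteq> 0" "q \<in> N2" "q \<noteq> p" "c2 p q \<noteq> 0" by blast
      then show False using cz[of j q] by simp
    qed
    then have "\<not> evo_quot_simple N c (span1 u)"
    proof
      assume A: "\<forall>j\<in>N1. j \<noteq> i \<longrightarrow> c1 i j = 0"
      show ?thesis
      proof (rule not_simple_coord[OF fin id, where M = "{i} \<times> N2" and ma = m0 and mb = "(i, p')" and mc = "(i', p)"])
        show "{i} \<times> N2 \<subseteq> N" using iN by (auto simp: N_def)
        show "\<forall>m\<in>{i} \<times> N2. \<forall>k\<in>N. k \<notin> {i} \<times> N2 \<longrightarrow> c m k = 0"
          using A by (auto simp: N_def c_def tensor_const_def)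
      qed (use ip pN u0 p' i' iN in \<open>auto simp: N_def\<close>)
    next
      assume B: "\<forall>q\<in>N2. q \<noteq> p \<longrightarrow> c2 p q = 0"
      show ?thesis
      proof (rule not_simple_coord[OF fin id, where M = "N1 \<times> {p}" and ma = m0 and mb = "(i', p)" and mc = "(i, p')"])
        show "N1 \<times> {p} \<subseteq> N" using pN by (auto simp: N_def)
        show "\<forall>m\<in>N1 \<times> {p}. \<forall>k\<in>N. k \<notin> N1 \<times> {p} \<longrightarrow> c m k = 0"
          using B by (auto simp: N_def c_def tensor_const_def)
      qed (use ip iN u0 p' i' pN in \<open>auto simp: N_def\<close>)
    qed
    then show ?thesis by (simp add: N_def c_def)
  qed
qed

end
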